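(* Let $\alpha\in(0,1)$ and $T>0$. There is no function $\psi\in C^1((0,T]^2)\cap C([0,T]^2)$ with $\partial_t\psi(\cdot,s)\in L^1(0,T)$ for every $s\in[0,T]$ and $\partial_s\psi(t,\cdot)\in L^1(0,T)$ for every $t\in[0,T]$ such that $$\partial_t^\alpha\psi(\cdot,s)(t)+\partial_s^\alpha\psi(t,\cdot)(s)\ge0\ \text{ for all }(t,s)\in(0,T)^2,\qquad \psi(t,t)=0\ \text{ for all } t\in[0,T],\qquad \psi>0\ \text{ on } [0,T]^2\setminus\{t=s\}.$$
   Context: $\partial_t^\alpha$ denotes Caputo's fractional derivative in the variable $t$: for a function $f$ of one variable, $(\partial_t^\alpha f)(t)=\frac{1}{\Gamma(1-\alpha)}\int_0^t\frac{f'(\tau)}{(t-\tau)^\alpha}d\tau$; $\partial_t^\alpha\psi(\cdot,s)(t)$ is this derivative of $t\mapsto\psi(t,s)$ evaluated at $t$, and analogously for $\partial_s^\alpha\psi(t,\cdot)(s)$. *)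

theory Defs
  imports "HOL-Analysis.Analysis"
begin

definition caputo :: "real \<Rightarrow> (real \<Rightarrow> real) \<Rightarrow> real \<Rightarrow> real" where
  "caputo \<alpha> f t = (1 / Gamma (1 - \<alpha>)) * (LBINT \<tau>:{0<..<t}. deriv f \<tau> / (t - \<tau>) powr \<alpha>)"

definition C1_on2 :: "(real \<times> real) set \<Rightarrow> (real \<times> real \<Rightarrow> real) \<Rightarrow> bool" where
  "C1_on2 S f \<longleftrightarrow> (\<exists>Dt Ds. continuous_on S Dt \<and> continuous_on S Ds \<and>
     (\<forall>p\<in>S. (f has_derivative (\<lambda>(h, k). Dt p * h + Ds p * k)) (at p within S)))"

end

theory Submission
  imports Defs
begin

lemma powr_integrable_aux:
  fixes \<alpha> c :: real
  assumes "0 < \<alpha>" "\<alpha> < 1" "0 < c"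
  shows "(\<lambda>\<tau>. (c - \<tau>) powr (-\<alpha>)) integrable_on {0..c}"
proof -
  define G where "G \<tau> = - ((c - \<tau>) powr (1 - \<alpha>)) / (1 - \<alpha>)" for \<tau>
  have "((\<lambda>\<tau>. (c - \<tau>) powr (-\<alpha>)) has_integral G c - G 0) {0..c}"
  proof (rule fundamental_theorem_of_calculus_interior)
    show "0 \<le> c" using assms by simp
    show "continuous_on {0..c} G" unfolding G_def using assms
      by (intro continuous_intros continuous_on_powr') auto
    fix x assume x: "x \<in> {0<..<c}"
    have "((\<lambda>\<tau>. (c - \<tau>) powr (1 - \<alpha>)) has_real_derivative (1 - \<alpha>) * (c - x) powr (1 - \<alpha> - 1) * (0 - 1)) (at x)"
      using x by (intro DERIV_chain2[OF has_real_derivative_powr] derivative_intros) auto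
    then have "(G has_real_derivative (c - x) powr (-\<alpha>)) (at x)"
      unfolding G_def using assms x by (auto intro!: derivative_eq_intros)
    then show "(G has_vector_derivative (c - x) powr (-\<alpha>)) (at x)"
      by (simp add: has_real_derivative_iff_has_vector_derivative)
  qed
  then show ?thesis by blast
qed

lemma core:
  fixes f f' :: "real \<Rightarrow> real" and \<alpha> c :: real
  assumes a0: "0 < \<alpha>" and a1: "\<alpha> < 1" and c0: "0 < c"
    and fc: "continuous_on {0..c} f" and f0: "f c = 0" and fpos: "\<forall>\<tau>\<in>{0..<c}. f \<tau> > 0"
    and fd: "\<forall>\<tau>\<in>{0<..c}. (f has_real_derivative f' \<tau>) (at \<tau>)"
    and f'c: "continuous_on {0<..c} f'"
    and f'i: "set_integrable lborel {0<..<c} f'"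
  shows "(LBINT \<tau>:{0<..<c}. f' \<tau> / (c - \<tau>) powr \<alpha>) < 0"
proof -
  define h where "h \<tau> = f' \<tau> / (c - \<tau>) powr \<alpha>" for \<tau>
  define k where "k \<tau> = \<alpha> * f \<tau> / (c - \<tau>) powr (\<alpha> + 1)" for \<tau>
  define F where "F \<tau> = f \<tau> / (c - \<tau>) powr \<alpha>" for \<tau>
  have der: "(F has_real_derivative h \<tau> + k \<tau>) (at \<tau>)" if \<tau>: "\<tau> \<in> {0<..<c}" for \<tau>
  proof -
    define x where "x = c - \<tau>"
    have x0: "x > 0" using \<tau> x_def by simp
    have P: "((\<lambda>\<tau>. (c - \<tau>) powr \<alpha>) has_real_derivative \<alpha> * (c - \<tau>) powr (\<alpha> - 1) * (0 - 1)) (at \<tau>)"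
      using \<tau> by (intro DERIV_chain2[OF has_real_derivative_powr] derivative_intros) auto
    have "(F has_real_derivative (f' \<tau> * (c - \<tau>) powr \<alpha> - f \<tau> * (\<alpha> * (c - \<tau>) powr (\<alpha> - 1) * (0 - 1))) / ((c - \<tau>) powr \<alpha> * (c - \<tau>) powr \<alpha>)) (at \<tau>)"
      unfolding F_def using \<tau> fd by (intro DERIV_divide P) auto
    moreover have "(f' \<tau> * (c - \<tau>) powr \<alpha> - f \<tau> * (\<alpha> * (c - \<tau>) powr (\<alpha> - 1) * (0 - 1))) / ((c - \<tau>) powr \<alpha> * (c - \<tau>) powr \<alpha>) = h \<tau> + k \<tau>"
    proof -
      have e1: "x powr (\<alpha> - 1) = x powr \<alpha> / x" using x0 by (simp add: powr_diff)
      have e2: "x powr (\<alpha> + 1) = x powr \<alpha> * x" using x0 by (simp add: powr_add)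
      have "x powr \<alpha> > 0" using x0 by simp
      then show ?thesis unfolding h_def k_def x_def[symmetric] e1 e2 using x0
        by (simp add: field_simps)
    qed
    ultimately show ?thesis by simp
  qed
  have Fc: "F c = 0" unfolding F_def by simp
  have F0: "F 0 > 0" unfolding F_def using fpos c0 by simp
  have Fcont: "continuous_on {0..c} F"
  proof (clarsimp simp: continuous_on_eq_continuous_within)
    fix x assume x: "0 \<le> x" "x \<le> c"
    show "continuous (at x within {0..c}) F"
    proof (cases "x < c")
      case True
      have "continuous_on {0..<c} F" unfolding F_def
        by (intro continuous_intros continuous_on_subset[OF fc]) auto
      then have "continuous (at x within {0..<c}) F"
        using x True by (simp add: continuous_on_eq_continuous_within)
      moreover have "at x within {0..c} = at x within {0..<c}"
        by (rule at_within_nhd[of _ "{..<c}"]) (use True in auto)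
      ultimately show ?thesis by (simp add: continuous_within)
    next
      case False
      then have xc: "x = c" using x by simp
      have dq: "((\<lambda>y. (f y - f c) / (y - c)) \<longlongrightarrow> f' c) (at c within {0..c})"
        using fd c0 by (simp add: has_field_derivative_iff[symmetric] has_field_derivative_at_within)
      have pw: "((\<lambda>y. (c - y) powr (1 - \<alpha>)) \<longlongrightarrow> 0) (at c within {0..c})"
      proof (rule tendsto_zero_powrI)
        show "((\<lambda>y. c - y) \<longlongrightarrow> 0) (at c within {0..c})"
          by (intro tendsto_eq_intros) auto
        show "((\<lambda>y. 1 - \<alpha>) \<longlongrightarrow> 1 - \<alpha>) (at c within {0..c})" by simp
        show "\<forall>\<^sub>F y in at c within {0..c}. 0 \<le> c - y"
          by (auto simp: eventually_at_filter)
        show "0 < 1 - \<alpha>" using a1 by simp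
      qed
      have "((\<lambda>y. (f y - f c) / (y - c) * - ((c - y) powr (1 - \<alpha>))) \<longlongrightarrow> f' c * - 0) (at c within {0..c})"
        by (intro tendsto_intros dq pw)
      then have "((\<lambda>y. (f y - f c) / (y - c) * - ((c - y) powr (1 - \<alpha>))) \<longlongrightarrow> F c) (at c within {0..c})"
        by (simp add: Fc)
      then have "(F \<longlongrightarrow> F c) (at c within {0..c})"
      proof (rule Lim_transform_eventually)
        show "\<forall>\<^sub>F y in at c within {0..c}. (f y - f c) / (y - c) * - ((c - y) powr (1 - \<alpha>)) = F y"
        proof -
          have "(f y - f c) / (y - c) * - ((c - y) powr (1 - \<alpha>)) = F y" if y: "y \<le> c" "y \<noteq> c" for y
          proof -
          from y have y0: "c - y > 0" by simp
          have e: "(c - y) powr (1 - \<alpha>) = (c - y) / (c - y) powr \<alpha>"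
            using y0 by (simp add: powr_diff)
          have "(c - y) powr \<alpha> > 0" using y0 by simp
          then show "(f y - f c) / (y - c) * - ((c - y) powr (1 - \<alpha>)) = F y"
            unfolding F_def f0 using y0 by (simp add: e field_simps)
          qed
          then show ?thesis by (auto simp: eventually_at_filter)
        qed
      qed
      then show ?thesis using xc by (simp add: continuous_within)
    qed
  qed
  have FTC: "((\<lambda>\<tau>. h \<tau> + k \<tau>) has_integral F c - F 0) {0..c}"
    using c0 Fcont der
    by (intro fundamental_theorem_of_calculus_interior) (auto simp: has_real_derivative_iff_has_vector_derivative)
  have f'abs: "f' absolutely_integrable_on {0<..<c}"
  proof -
    have "integrable lborel (\<lambda>x. indicat_real {0<..<c} x *\<^sub>R f' x)"
      using f'i by (simp add: set_integrable_def)
    then have "integrable lebesgue (\<lambda>x. indicat_real {0<..<c} x *\<^sub>R f' x)"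
      by (subst integrable_completion) (auto dest: borel_measurable_integrable)
    then show ?thesis by (simp add: absolutely_integrable_on_def set_integrable_def)
  qed
  obtain M where M: "\<And>\<tau>. \<tau> \<in> {c/2..c} \<Longrightarrow> \<bar>f' \<tau>\<bar> \<le> M"
  proof -
    have "compact (f' ` {c/2..c})"
      by (rule compact_continuous_image[OF continuous_on_subset[OF f'c]]) (use c0 in auto)
    then have "bounded (f' ` {c/2..c})" by (rule compact_imp_bounded)
    then obtain a where "\<forall>x\<in>{c/2..c}. \<bar>f' x\<bar> \<le> a" by (auto simp: bounded_real)
    then show ?thesis using that by blast
  qed
  have habs: "h absolutely_integrable_on {0<..<c}"
  proof (rule measurable_bounded_by_integrable_imp_absolutely_integrable)
    show "h \<in> borel_measurable (lebesgue_on {0<..<c})"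
      unfolding h_def
      by (intro continuous_imp_measurable_on_sets_lebesgue continuous_intros continuous_on_subset[OF f'c]) auto
    show "{0<..<c} \<in> sets lebesgue" by simp
    have i1: "(\<lambda>\<tau>. \<bar>f' \<tau>\<bar> * (c/2) powr (-\<alpha>)) integrable_on {0<..<c}"
      using f'abs by (intro integrable_on_mult_left) (auto simp: absolutely_integrable_on_def)
    have i2: "(\<lambda>\<tau>. M * (c - \<tau>) powr (-\<alpha>)) integrable_on {0<..<c}"
      using powr_integrable_aux[OF a0 a1 c0]
      by (intro integrable_on_mult_right) (simp add: integrable_on_open_interval_real)
    show "(\<lambda>\<tau>. \<bar>f' \<tau>\<bar> * (c/2) powr (-\<alpha>) + M * (c - \<tau>) powr (-\<alpha>)) integrable_on {0<..<c}"
      using i1 i2 by (rule integrable_add)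
    fix \<tau> assume \<tau>: "\<tau> \<in> {0<..<c}"
    have hn: "norm (h \<tau>) = \<bar>f' \<tau>\<bar> * (c - \<tau>) powr (-\<alpha>)"
      unfolding h_def using \<tau> by (simp add: powr_minus_divide abs_mult divide_inverse)
    have M0: "0 \<le> M" using M[of c] c0 by force
    have p0: "0 \<le> (c - \<tau>) powr (-\<alpha>)" "0 \<le> (c/2) powr (-\<alpha>)" by auto
    show "norm (h \<tau>) \<le> \<bar>f' \<tau>\<bar> * (c/2) powr (-\<alpha>) + M * (c - \<tau>) powr (-\<alpha>)"
    proof (cases "\<tau> \<le> c/2")
      case True
      have "(c - \<tau>) powr (-\<alpha>) \<le> (c/2) powr (-\<alpha>)"
        using True c0 a0 by (intro powr_mono2') auto
      then have "\<bar>f' \<tau>\<bar> * (c - \<tau>) powr (-\<alpha>) \<le> \<bar>f' \<tau>\<bar> * (c/2) powr (-\<alpha>)"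
        by (intro mult_left_mono) auto
      moreover have "0 \<le> M * (c - \<tau>) powr (-\<alpha>)" using M0 p0 by simp
      ultimately show ?thesis using hn by linarith
    next
      case False
      then have "\<bar>f' \<tau>\<bar> \<le> M" using M \<tau> by auto
      then have "\<bar>f' \<tau>\<bar> * (c - \<tau>) powr (-\<alpha>) \<le> M * (c - \<tau>) powr (-\<alpha>)"
        by (intro mult_right_mono) auto
      moreover have "0 \<le> \<bar>f' \<tau>\<bar> * (c/2) powr (-\<alpha>)" using p0 by simp
      ultimately show ?thesis using hn by linarith
    qed
  qed
  have hint: "h integrable_on {0..c}"
    using habs by (auto simp: absolutely_integrable_on_def integrable_on_open_interval_real)
  have kint: "k integrable_on {0..c}"
  proof -
    have "(\<lambda>\<tau>. (h \<tau> + k \<tau>) - h \<tau>) integrable_on {0..c}"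
      using FTC hint by (intro integrable_diff) auto
    then show ?thesis by simp
  qed
  have knn: "0 \<le> integral {0..c} k"
  proof (rule integral_nonneg[OF kint])
    fix x assume x: "x \<in> {0..c}"
    have "0 \<le> f x" using fpos f0 x by (cases "x < c") (auto intro: less_imp_le)
    then show "0 \<le> k x" unfolding k_def using a0 by simp
  qed
  have "integral {0..c} (\<lambda>\<tau>. h \<tau> + k \<tau>) = F c - F 0"
    using FTC by (rule integral_unique)
  moreover have "integral {0..c} (\<lambda>\<tau>. h \<tau> + k \<tau>) = integral {0..c} h + integral {0..c} k"
    using hint kint by (rule integral_add)
  ultimately have hneg: "integral {0..c} h < 0" using knn Fc F0 by linarith
  have "set_integrable lborel {0<..<c} h"
  proof -
    have "integrable lebesgue (\<lambda>x. indicat_real {0<..<c} x *\<^sub>R h x)"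
      using habs by (simp add: absolutely_integrable_on_def set_integrable_def)
    moreover have "(\<lambda>x. indicat_real {0<..<c} x *\<^sub>R h x) \<in> borel_measurable borel"
      unfolding h_def
      by (intro borel_measurable_continuous_on_indicator continuous_intros continuous_on_subset[OF f'c]) auto
    ultimately show ?thesis unfolding set_integrable_def
      by (subst (asm) integrable_completion) auto
  qed
  then have "(LBINT \<tau>:{0<..<c}. h \<tau>) = integral {0<..<c} h"
    by (rule set_borel_integral_eq_integral)
  also have "\<dots> = integral {0..c} h" by (simp add: integral_open_interval_real)
  finally show ?thesis using hneg unfolding h_def by simp
qed


lemma deriv_line:
  fixes \<psi> :: "real \<times> real \<Rightarrow> real" and Dt Ds :: "real \<times> real \<Rightarrow> real" and T :: real
  assumes d: "\<forall>p\<in>{0<..T} \<times> {0<..T}. (\<psi> has_derivative (\<lambda>(h, k). Dt p * h + Ds p * k)) (at p within {0<..T} \<times> {0<..T})"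
    and p: "p \<in> {0<..<T} \<times> {0<..<T}"
  shows "(\<psi> has_derivative (\<lambda>(h, k). Dt p * h + Ds p * k)) (at p)"
proof -
  have sub: "{0<..<T} \<times> {0<..<T} \<subseteq> {0<..T} \<times> {0<..T}"
    by (intro Sigma_mono) auto
  have pS: "p \<in> {0<..T} \<times> {0<..T}" using sub p by (rule subsetD)
  have "(\<psi> has_derivative (\<lambda>(h, k). Dt p * h + Ds p * k)) (at p within {0<..T} \<times> {0<..T})"
    using d pS by (rule bspec)
  then have "(\<psi> has_derivative (\<lambda>(h, k). Dt p * h + Ds p * k)) (at p within {0<..<T} \<times> {0<..<T})"
    by (rule has_derivative_subset) (rule sub)
  moreover have op: "open ({0<..<T} \<times> {0<..<T} :: (real \<times> real) set)"
    by (intro open_Times) auto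
  ultimately show ?thesis by (simp only: at_within_open[OF p op])
qed

theorem proposition7p3:
  fixes \<alpha> T :: real
  assumes "0 < \<alpha>" and "\<alpha> < 1" and "0 < T"
  shows "\<not> (\<exists>\<psi> :: real \<times> real \<Rightarrow> real.
      C1_on2 ({0<..T} \<times> {0<..T}) \<psi> \<and>
      continuous_on ({0..T} \<times> {0..T}) \<psi> \<and>
      (\<forall>s\<in>{0..T}. (\<forall>t\<in>{0<..<T}. (\<lambda>t. \<psi> (t, s)) differentiable (at t)) \<and>
          set_integrable lborel {0<..<T} (deriv (\<lambda>t. \<psi> (t, s)))) \<and>
      (\<forall>t\<in>{0..T}. (\<forall>s\<in>{0<..<T}. (\<lambda>s. \<psi> (t, s)) differentiable (at s)) \<and>
          set_integrable lborel {0<..<T} (deriv (\<lambda>s. \<psi> (t, s)))) \<and>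
      (\<forall>t\<in>{0<..<T}. \<forall>s\<in>{0<..<T}.
          caputo \<alpha> (\<lambda>t'. \<psi> (t', s)) t + caputo \<alpha> (\<lambda>s'. \<psi> (t, s')) s \<ge> 0) \<and>
      (\<forall>t\<in>{0..T}. \<psi> (t, t) = 0) \<and>
      (\<forall>t\<in>{0..T}. \<forall>s\<in>{0..T}. t \<noteq> s \<longrightarrow> \<psi> (t, s) > 0))"
proof
  assume "\<exists>\<psi> :: real \<times> real \<Rightarrow> real.
      C1_on2 ({0<..T} \<times> {0<..T}) \<psi> \<and>
      continuous_on ({0..T} \<times> {0..T}) \<psi> \<and>
      (\<forall>s\<in>{0..T}. (\<forall>t\<in>{0<..<T}. (\<lambda>t. \<psi> (t, s)) differentiable (at t)) \<and>
          set_integrable lborel {0<..<T} (deriv (\<lambda>t. \<psi> (t, s)))) \<and>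
      (\<forall>t\<in>{0..T}. (\<forall>s\<in>{0<..<T}. (\<lambda>s. \<psi> (t, s)) differentiable (at s)) \<and>
          set_integrable lborel {0<..<T} (deriv (\<lambda>s. \<psi> (t, s)))) \<and>
      (\<forall>t\<in>{0<..<T}. \<forall>s\<in>{0<..<T}.
          caputo \<alpha> (\<lambda>t'. \<psi> (t', s)) t + caputo \<alpha> (\<lambda>s'. \<psi> (t, s')) s \<ge> 0) \<and>
      (\<forall>t\<in>{0..T}. \<psi> (t, t) = 0) \<and>
      (\<forall>t\<in>{0..T}. \<forall>s\<in>{0..T}. t \<noteq> s \<longrightarrow> \<psi> (t, s) > 0)"
  then obtain \<psi> :: "real \<times> real \<Rightarrow> real" where
    C1: "C1_on2 ({0<..T} \<times> {0<..T}) \<psi>" and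
    cont: "continuous_on ({0..T} \<times> {0..T}) \<psi>" and
    H1: "\<forall>s\<in>{0..T}. (\<forall>t\<in>{0<..<T}. (\<lambda>t. \<psi> (t, s)) differentiable (at t)) \<and>
          set_integrable lborel {0<..<T} (deriv (\<lambda>t. \<psi> (t, s)))" and
    H2: "\<forall>t\<in>{0..T}. (\<forall>s\<in>{0<..<T}. (\<lambda>s. \<psi> (t, s)) differentiable (at s)) \<and>
          set_integrable lborel {0<..<T} (deriv (\<lambda>s. \<psi> (t, s)))" and
    cap: "\<forall>t\<in>{0<..<T}. \<forall>s\<in>{0<..<T}.
          caputo \<alpha> (\<lambda>t'. \<psi> (t', s)) t + caputo \<alpha> (\<lambda>s'. \<psi> (t, s')) s \<ge> 0" and
    diag: "\<forall>t\<in>{0..T}. \<psi> (t, t) = 0" and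
    pos: "\<forall>t\<in>{0..T}. \<forall>s\<in>{0..T}. t \<noteq> s \<longrightarrow> \<psi> (t, s) > 0"
    apply (elim exE conjE)
    apply (rule that)
          apply assumption+
    done
  have I1: "\<forall>s\<in>{0..T}. set_integrable lborel {0<..<T} (deriv (\<lambda>t. \<psi> (t, s)))"
    using H1 by simp
  have I2: "\<forall>t\<in>{0..T}. set_integrable lborel {0<..<T} (deriv (\<lambda>s. \<psi> (t, s)))"
    using H2 by simp
  obtain Dt Ds where Dtc: "continuous_on ({0<..T} \<times> {0<..T}) Dt"
    and Dsc: "continuous_on ({0<..T} \<times> {0<..T}) Ds"
    and D: "\<forall>p\<in>{0<..T} \<times> {0<..T}. (\<psi> has_derivative (\<lambda>(h, k). Dt p * h + Ds p * k)) (at p within {0<..T} \<times> {0<..T})"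
    using C1 unfolding C1_on2_def by (elim exE conjE) (rule that)
  define c where "c = T / 2"
  have c0: "0 < c" and cT: "c < T" using assms by (auto simp: c_def)
  define f1 where "f1 \<tau> = \<psi> (\<tau>, c)" for \<tau>
  define f2 where "f2 \<tau> = \<psi> (c, \<tau>)" for \<tau>
  have d1: "(f1 has_real_derivative Dt (\<tau>, c)) (at \<tau>)" if "\<tau> \<in> {0<..<T}" for \<tau>
  proof -
    have "((\<lambda>x. (x, c)) has_derivative (\<lambda>h. (h, 0))) (at \<tau>)"
      by (auto intro!: derivative_eq_intros)
    from has_derivative_compose[OF this deriv_line[OF D]]
    have "(f1 has_derivative (\<lambda>h. Dt (\<tau>, c) * h)) (at \<tau>)"
      using that c0 cT unfolding f1_def by auto
    then show ?thesis by (simp add: has_field_derivative_def)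
  qed
  have d2: "(f2 has_real_derivative Ds (c, \<tau>)) (at \<tau>)" if "\<tau> \<in> {0<..<T}" for \<tau>
  proof -
    have "((\<lambda>x. (c, x)) has_derivative (\<lambda>h. (0, h))) (at \<tau>)"
      by (auto intro!: derivative_eq_intros)
    from has_derivative_compose[OF this deriv_line[OF D]]
    have "(f2 has_derivative (\<lambda>h. Ds (c, \<tau>) * h)) (at \<tau>)"
      using that c0 cT unfolding f2_def by auto
    then show ?thesis by (simp add: has_field_derivative_def)
  qed
  have neg1: "(LBINT \<tau>:{0<..<c}. deriv f1 \<tau> / (c - \<tau>) powr \<alpha>) < 0"
  proof (rule core[OF assms(1,2) c0])
    show "continuous_on {0..c} f1" unfolding f1_def
      by (rule continuous_on_compose2[OF cont]) (use cT in \<open>auto intro!: continuous_intros\<close>)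
    show "f1 c = 0" unfolding f1_def using diag c0 cT by auto
    show "\<forall>\<tau>\<in>{0..<c}. 0 < f1 \<tau>" unfolding f1_def using pos c0 cT by auto
    show "\<forall>\<tau>\<in>{0<..c}. (f1 has_real_derivative deriv f1 \<tau>) (at \<tau>)"
    proof
      fix \<tau> assume "\<tau> \<in> {0<..c}"
      then have t: "\<tau> \<in> {0<..<T}" using cT by auto
      show "(f1 has_real_derivative deriv f1 \<tau>) (at \<tau>)"
        using d1[OF t] DERIV_imp_deriv[OF d1[OF t]] by simp
    qed
    have "continuous_on {0<..c} (\<lambda>\<tau>. Dt (\<tau>, c))"
      by (rule continuous_on_compose2[OF Dtc]) (use cT c0 in \<open>auto intro!: continuous_intros\<close>)
    then show "continuous_on {0<..c} (deriv f1)"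
    proof (rule continuous_on_eq)
      fix \<tau> assume "\<tau> \<in> {0<..c}"
      then have t: "\<tau> \<in> {0<..<T}" using cT by auto
      show "Dt (\<tau>, c) = deriv f1 \<tau>" using DERIV_imp_deriv[OF d1[OF t]] by simp
    qed
    have f1eq: "f1 = (\<lambda>t. \<psi> (t, c))" by (rule ext) (simp add: f1_def)
    have cI: "c \<in> {0..T}" using c0 cT by simp
    have "set_integrable lborel {0<..<T} (deriv f1)" unfolding f1eq using bspec[OF I1 cI] by simp
    then show "set_integrable lborel {0<..<c} (deriv f1)"
      by (rule set_integrable_subset) (use cT in auto)
  qed
  have neg2: "(LBINT \<tau>:{0<..<c}. deriv f2 \<tau> / (c - \<tau>) powr \<alpha>) < 0"
  proof (rule core[OF assms(1,2) c0])
    show "continuous_on {0..c} f2" unfolding f2_def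
      by (rule continuous_on_compose2[OF cont]) (use cT in \<open>auto intro!: continuous_intros\<close>)
    show "f2 c = 0" unfolding f2_def using diag c0 cT by auto
    show "\<forall>\<tau>\<in>{0..<c}. 0 < f2 \<tau>" unfolding f2_def using pos c0 cT by auto
    show "\<forall>\<tau>\<in>{0<..c}. (f2 has_real_derivative deriv f2 \<tau>) (at \<tau>)"
    proof
      fix \<tau> assume "\<tau> \<in> {0<..c}"
      then have t: "\<tau> \<in> {0<..<T}" using cT by auto
      show "(f2 has_real_derivative deriv f2 \<tau>) (at \<tau>)"
        using d2[OF t] DERIV_imp_deriv[OF d2[OF t]] by simp
    qed
    have "continuous_on {0<..c} (\<lambda>\<tau>. Ds (c, \<tau>))"
      by (rule continuous_on_compose2[OF Dsc]) (use cT c0 in \<open>auto intro!: continuous_intros\<close>)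
    then show "continuous_on {0<..c} (deriv f2)"
    proof (rule continuous_on_eq)
      fix \<tau> assume "\<tau> \<in> {0<..c}"
      then have t: "\<tau> \<in> {0<..<T}" using cT by auto
      show "Ds (c, \<tau>) = deriv f2 \<tau>" using DERIV_imp_deriv[OF d2[OF t]] by simp
    qed
    have f2eq: "f2 = (\<lambda>s. \<psi> (c, s))" by (rule ext) (simp add: f2_def)
    have cI: "c \<in> {0..T}" using c0 cT by simp
    have "set_integrable lborel {0<..<T} (deriv f2)" unfolding f2eq using bspec[OF I2 cI] by simp
    then show "set_integrable lborel {0<..<c} (deriv f2)"
      by (rule set_integrable_subset) (use cT in auto)
  qed
  have G: "Gamma (1 - \<alpha>) > 0" using assms by (intro Gamma_real_pos) simp
  have "caputo \<alpha> f1 c < 0" "caputo \<alpha> f2 c < 0"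
    unfolding caputo_def using neg1 neg2 G by (auto simp: divide_neg_pos)
  moreover have "caputo \<alpha> f1 c + caputo \<alpha> f2 c \<ge> 0"
    using cap c0 cT unfolding f1_def f2_def by auto
  ultimately show False by linarith
qed

end
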